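(* Let $z_1\le z_2\le\dots\le z_r$ be real numbers and $\sigma_1,\dots,\sigma_r>0$. For $j=0,\dots,r$ let $$d_j=-\sum_{\ell=1}^j\frac1{\sigma_\ell}+\sum_{\ell=j+1}^r\frac1{\sigma_\ell},\qquad e_j=\sum_{\ell=1}^j\frac{z_\ell}{\sigma_\ell}-\sum_{\ell=j+1}^r\frac{z_\ell}{\sigma_\ell}.$$ Let $m\in\mathbb N$ (including $0$), and for $j=0,\dots,r$ and $k=1,\dots,r$ define $$b_j^k=\begin{cases}\sum_{\ell=0}^m\frac{(-1)^\ell z_k^{m-\ell}\,m!}{d_j^{\ell+1}(m-\ell)!}& d_j\ne0,\\[2pt] z_k^{m+1}/(m+1)& d_j=0.\end{cases}$$ Then $$\int_{\mathbb R}x^m\exp\Big(-\sum_{\ell=1}^r\frac{|x-z_\ell|}{\sigma_\ell}\Big)\,dx=\sum_{\ell=1}^r e^{d_\ell z_\ell+e_\ell}\big(b_{\ell-1}^\ell-b_\ell^\ell\big).$$ *)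

theory Defs
  imports "HOL-Analysis.Analysis"
begin

definition dcoef :: "nat \<Rightarrow> (nat \<Rightarrow> real) \<Rightarrow> nat \<Rightarrow> real" where
  "dcoef r \<sigma> j = - (\<Sum>l=1..j. 1 / \<sigma> l) + (\<Sum>l=j+1..r. 1 / \<sigma> l)"

definition ecoef :: "nat \<Rightarrow> (nat \<Rightarrow> real) \<Rightarrow> (nat \<Rightarrow> real) \<Rightarrow> nat \<Rightarrow> real" where
  "ecoef r z \<sigma> j = (\<Sum>l=1..j. z l / \<sigma> l) - (\<Sum>l=j+1..r. z l / \<sigma> l)"

definition bcoef :: "nat \<Rightarrow> (nat \<Rightarrow> real) \<Rightarrow> (nat \<Rightarrow> real) \<Rightarrow> nat \<Rightarrow> nat \<Rightarrow> nat \<Rightarrow> real" where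
  "bcoef r z \<sigma> m j k =
     (if dcoef r \<sigma> j \<noteq> 0
      then (\<Sum>l=0..m. (-1) ^ l * z k ^ (m - l) * fact m / (dcoef r \<sigma> j ^ (l + 1) * fact (m - l)))
      else z k ^ (m + 1) / real (m + 1))"

end

theory Submission
  imports Defs
begin


definition Qs :: "nat \<Rightarrow> real \<Rightarrow> real \<Rightarrow> real" where
  "Qs m d x = (\<Sum>l=0..m. (-1) ^ l * x ^ (m - l) * fact m / (d ^ (l + 1) * fact (m - l)))"

lemma Qs_0: "Qs 0 d x = 1 / d" by (simp add: Qs_def)

lemma Qs_Suc: assumes "d \<noteq> 0"
  shows "Qs (Suc m) d x = x ^ Suc m / d - (Suc m) / d * Qs m d x"
proof -
  have "Qs (Suc m) d x = (\<Sum>l=0..Suc m. (-1) ^ l * x ^ (Suc m - l) * fact (Suc m) / (d ^ (l + 1) * fact (Suc m - l)))"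
    by (simp add: Qs_def)
  also have "\<dots> = x ^ Suc m / d + (\<Sum>l=0..m. (-1) ^ Suc l * x ^ (Suc m - Suc l) * fact (Suc m) / (d ^ (Suc l + 1) * fact (Suc m - Suc l)))"
    by (subst sum.atLeast0_atMost_Suc_shift) simp
  also have "(\<Sum>l=0..m. (-1) ^ Suc l * x ^ (Suc m - Suc l) * fact (Suc m) / (d ^ (Suc l + 1) * fact (Suc m - Suc l)))
      = - (Suc m) / d * Qs m d x"
    unfolding Qs_def sum_distrib_left
    by (rule sum.cong) (use assms in \<open>auto simp: field_simps\<close>)
  finally show ?thesis using assms by (simp add: field_simps)
qed

lemma Qs_deriv: assumes "d \<noteq> 0"
  shows "(Qs m d has_real_derivative x ^ m - d * Qs m d x) (at x)"
proof (induction m arbitrary: x)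
  case 0
  then show ?case using assms by (simp add: Qs_0)
next
  case (Suc m)
  have eq: "Qs (Suc m) d = (\<lambda>x. x ^ Suc m / d - (Suc m) / d * Qs m d x)"
    using Qs_Suc[OF assms] by auto
  have "((\<lambda>x. x ^ Suc m / d - (Suc m) / d * Qs m d x) has_real_derivative
     (Suc m) * x ^ m / d - (Suc m) / d * (x ^ m - d * Qs m d x)) (at x)"
  proof -
    have p: "((\<lambda>x. x ^ Suc m) has_real_derivative (Suc m) * x^m) (at x)"
      using DERIV_pow[of "Suc m" x] by simp
    show ?thesis
      by (intro DERIV_diff DERIV_cmult DERIV_cdivide p Suc.IH)
  qed
  moreover have "(Suc m) * x ^ m / d - (Suc m) / d * (x ^ m - d * Qs m d x) = x ^ Suc m - d * Qs (Suc m) d x"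
    using assms by (simp add: Qs_Suc field_simps)
  ultimately show ?case by (simp add: eq)
qed


lemma lim_pow_exp_top:
  fixes d :: real assumes "d < 0"
  shows "((\<lambda>x. x ^ k * exp (d * x)) \<longlongrightarrow> 0) at_top"
proof -
  have lim: "filterlim (\<lambda>x. (-d) * x) at_top at_top"
    by (rule filterlim_tendsto_pos_mult_at_top[OF tendsto_const _ filterlim_ident]) (use assms in simp)
  have "((\<lambda>x. (-1/d) ^ k * (((-d) * x) ^ k / exp ((-d) * x))) \<longlongrightarrow> (-1/d) ^ k * 0) at_top"
    by (intro tendsto_mult tendsto_const filterlim_compose[OF tendsto_power_div_exp_0 lim])
  moreover have "(-1/d) ^ k * (((-d) * x) ^ k / exp ((-d) * x)) = x ^ k * exp (d * x)" for x
  proof -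
    have "(-1/d) ^ k * ((-d) * x) ^ k = x ^ k"
      unfolding power_mult_distrib[symmetric] using assms by (simp add: field_simps)
    then show ?thesis by (simp add: exp_minus field_simps)
  qed
  ultimately show ?thesis by simp
qed

lemma lim_pow_exp_bot:
  fixes d :: real assumes "d > 0"
  shows "((\<lambda>x. x ^ k * exp (d * x)) \<longlongrightarrow> 0) at_bot"
proof -
  have "((\<lambda>x. (-1) ^ k * (x ^ k * exp ((-d) * x))) \<longlongrightarrow> (-1) ^ k * 0) at_top"
    by (intro tendsto_mult tendsto_const lim_pow_exp_top) (use assms in simp)
  moreover have "(\<lambda>x. (-1) ^ k * (x ^ k * exp ((-d) * x))) = (\<lambda>x. (-x) ^ k * exp (d * (-x)))"
  proof
    fix x show "(-1) ^ k * (x ^ k * exp ((-d) * x)) = (-x) ^ k * exp (d * (-x))"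
      by (simp only: power_minus[of x k]) (simp add: mult_ac)
  qed
  ultimately have "((\<lambda>x. (-x) ^ k * exp (d * (-x))) \<longlongrightarrow> 0) at_top"
    by simp
  then show ?thesis unfolding filterlim_at_bot_mirror by simp
qed

definition Pc :: "nat \<Rightarrow> real \<Rightarrow> real \<Rightarrow> real" where
  "Pc m d x = (if d \<noteq> 0 then Qs m d x else x ^ (m + 1) / real (m + 1))"

definition Af :: "nat \<Rightarrow> real \<Rightarrow> real \<Rightarrow> real \<Rightarrow> real" where
  "Af m d e x = exp (d * x + e) * Pc m d x"

lemma Af_deriv: "(Af m d e has_real_derivative x ^ m * exp (d * x + e)) (at x)"
proof (cases "d = 0")
  case True
  have "((\<lambda>x. exp e * (x ^ (m + 1) / real (m + 1))) has_real_derivative exp e * ((m+1) * x ^ m / real (m+1))) (at x)"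
    by (intro DERIV_cmult DERIV_cdivide) (use DERIV_pow[of "m+1" x] in simp)
  moreover have "Af m d e = (\<lambda>x. exp e * (x ^ (m + 1) / real (m + 1)))"
    using True by (auto simp: Af_def Pc_def)
  ultimately show ?thesis using True by (auto simp: mult.commute)
next
  case False
  have "((\<lambda>x. exp (d * x + e) * Qs m d x) has_real_derivative
      exp (d * x + e) * d * Qs m d x + exp (d * x + e) * (x ^ m - d * Qs m d x)) (at x)"
    by (auto intro!: derivative_eq_intros Qs_deriv False)
  moreover have "Af m d e = (\<lambda>x. exp (d * x + e) * Qs m d x)"
    using False by (auto simp: Af_def Pc_def)
  ultimately show ?thesis by (simp add: algebra_simps)
qed

lemma Af_sum: assumes "d \<noteq> 0"
  shows "Af m d e = (\<lambda>x. \<Sum>l=0..m. ((-1) ^ l * fact m / (d ^ (l + 1) * fact (m - l)) * exp e) * (x ^ (m - l) * exp (d * x)))"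
proof
  fix x
  have "Af m d e x = exp (d * x + e) * Qs m d x" using assms by (simp add: Af_def Pc_def)
  also have "\<dots> = (\<Sum>l=0..m. ((-1) ^ l * fact m / (d ^ (l + 1) * fact (m - l)) * exp e) * (x ^ (m - l) * exp (d * x)))"
    unfolding Qs_def sum_distrib_left
    by (rule sum.cong) (auto simp: exp_add)
  finally show "Af m d e x = (\<Sum>l=0..m. ((-1) ^ l * fact m / (d ^ (l + 1) * fact (m - l)) * exp e) * (x ^ (m - l) * exp (d * x)))" .
qed

lemma Af_lim_bot: "d > 0 \<Longrightarrow> (Af m d e \<longlongrightarrow> 0) at_bot"
  apply (subst Af_sum, simp)
  apply (rule tendsto_null_sum)
  apply (rule tendsto_mult_right_zero)
  apply (rule lim_pow_exp_bot, simp)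
  done

lemma Af_lim_top: "d < 0 \<Longrightarrow> (Af m d e \<longlongrightarrow> 0) at_top"
  apply (subst Af_sum, simp)
  apply (rule tendsto_null_sum)
  apply (rule tendsto_mult_right_zero)
  apply (rule lim_pow_exp_top, simp)
  done



lemma lint_FTC_piecewise:
  fixes f F :: "real \<Rightarrow> real"
  assumes int: "integrable lborel f" and fc: "continuous_on UNIV f" and Fc: "continuous_on UNIV F"
    and S: "finite S"
    and D: "\<And>x. x \<notin> S \<Longrightarrow> (F has_real_derivative f x) (at x)"
    and A: "(F \<longlongrightarrow> A) at_bot" and B: "(F \<longlongrightarrow> B) at_top"
  shows "integral\<^sup>L lborel f = B - A"
proof -
  have I: "(LINT x:{a..b}|lborel. f x) = F b - F a" if "a \<le> b" for a b
  proof -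
    have si: "set_integrable lborel {a..b} f"
      by (rule borel_integrable_atLeastAtMost') (rule continuous_on_subset[OF fc], simp)
    have "(f has_integral (F b - F a)) {a..b}"
    proof (rule fundamental_theorem_of_calculus_interior_strong[OF S that])
      show "continuous_on {a..b} F" by (rule continuous_on_subset[OF Fc], simp)
      fix x assume "x \<in> {a<..<b} - S"
      then show "(F has_vector_derivative f x) (at x)"
        using D has_real_derivative_iff_has_vector_derivative by blast
    qed
    then show ?thesis using set_borel_integral_eq_integral(2)[OF si] by (simp add: integral_unique)
  qed
  define s where "s = (\<lambda>n::nat. \<lambda>x. indicator {- real n..real n} x * f x)"
  have "(\<lambda>n. integral\<^sup>L lborel (s n)) \<longlonglongrightarrow> integral\<^sup>L lborel f"
  proof (rule integral_dominated_convergence[where w = "\<lambda>x. norm (f x)"])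
    show "f \<in> borel_measurable lborel" using int by auto
    show "\<And>i. s i \<in> borel_measurable lborel"
      unfolding s_def using int by (intro borel_measurable_times borel_measurable_indicator) auto
    show "integrable lborel (\<lambda>x. norm (f x))" using int by auto
    show "AE x in lborel. (\<lambda>i. s i x) \<longlonglongrightarrow> f x"
    proof (rule AE_I2)
      fix x :: real
      obtain N :: nat where "\<bar>x\<bar> \<le> real N" using real_arch_simple by blast
      then have "eventually (\<lambda>n. s n x = f x) sequentially"
        unfolding eventually_sequentially s_def
        by (intro exI[of _ N]) (auto simp: indicator_def)
      then show "(\<lambda>i. s i x) \<longlonglongrightarrow> f x" by (rule tendsto_eventually)
    qed
    show "\<And>i. AE x in lborel. norm (s i x) \<le> norm (f x)"
      unfolding s_def by (auto simp: indicator_def)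
  qed
  moreover have "integral\<^sup>L lborel (s n) = F (real n) - F (- real n)" for n
    using I[of "- real n" "real n"] unfolding s_def set_lebesgue_integral_def by simp
  ultimately have L1: "(\<lambda>n. F (real n) - F (- real n)) \<longlonglongrightarrow> integral\<^sup>L lborel f" by simp
  have "(\<lambda>n. F (real n) - F (- real n)) \<longlonglongrightarrow> B - A"
  proof (intro tendsto_diff)
    show "(\<lambda>n. F (real n)) \<longlonglongrightarrow> B"
      by (rule filterlim_compose[OF B filterlim_real_sequentially])
    have "filterlim (\<lambda>n. - real n) at_bot sequentially"
      using filterlim_real_sequentially filterlim_uminus_at_top by blast
    then show "(\<lambda>n. F (- real n)) \<longlonglongrightarrow> A"
      by (rule filterlim_compose[OF A])
  qed
  with L1 show ?thesis using LIMSEQ_unique by blast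
qed



lemma Af_isCont: "isCont (Af m d e) x"
  using DERIV_isCont[OF Af_deriv] .

lemma tail_left:
  fixes d c e :: real
  assumes d: "d > 0" and c: "c \<le> 0"
  shows "set_integrable lborel {..<c} (\<lambda>x. x ^ m * exp (d * x + e))"
proof -
  let ?g = "\<lambda>x. (-1) ^ m * (x ^ m * exp (d * x + e))"
  let ?F = "\<lambda>x. (-1) ^ m * Af m d e x"
  have "set_integrable lborel (einterval (-\<infinity>) (ereal c)) ?g"
  proof (rule interval_integral_FTC_nonneg(1)[where F = ?F and A = 0 and B = "?F c"])
    show "- \<infinity> < ereal c" by simp
    show "DERIV ?F x :> ?g x" for x by (intro DERIV_cmult Af_deriv)
    show "isCont ?g x" for x by (intro continuous_intros)
    show "AE x in lborel. - \<infinity> < ereal x \<longrightarrow> ereal x < ereal c \<longrightarrow> 0 \<le> ?g x"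
    proof (rule AE_I2, intro impI)
      fix x assume "ereal x < ereal c"
      then have "x < 0" using c by simp
      have "?g x = (-x) ^ m * exp (d * x + e)" by (simp only: power_minus[of x m])
      also have "\<dots> \<ge> 0" using \<open>x < 0\<close> by simp
      finally show "0 \<le> ?g x" .
    qed
    show "((?F \<circ> real_of_ereal) \<longlongrightarrow> 0) (at_right (- \<infinity>))"
      unfolding ereal_tendsto_simps
      using tendsto_mult_right_zero[OF Af_lim_bot[OF d]] by simp
    show "((?F \<circ> real_of_ereal) \<longlongrightarrow> ?F c) (at_left (ereal c))"
      unfolding ereal_tendsto_simps
      by (intro tendsto_intros isCont_tendsto_compose[OF Af_isCont] tendsto_ident_at)
  qed
  then have "set_integrable lborel {..<c} ?g" by simp
  then show ?thesis by (subst (asm) set_integrable_mult_right_iff) auto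
qed

lemma tail_right:
  fixes d c e :: real
  assumes d: "d < 0" and c: "c \<ge> 0"
  shows "set_integrable lborel {c<..} (\<lambda>x. x ^ m * exp (d * x + e))"
proof -
  let ?g = "\<lambda>x. x ^ m * exp (d * x + e)"
  let ?F = "Af m d e"
  have "set_integrable lborel (einterval (ereal c) \<infinity>) ?g"
  proof (rule interval_integral_FTC_nonneg(1)[where F = ?F and A = "?F c" and B = 0])
    show "ereal c < \<infinity>" by simp
    show "DERIV ?F x :> ?g x" for x by (intro Af_deriv)
    show "isCont ?g x" for x by (intro continuous_intros)
    show "AE x in lborel. ereal c < ereal x \<longrightarrow> ereal x < \<infinity> \<longrightarrow> 0 \<le> ?g x"
      using c by (intro AE_I2) auto
    show "((?F \<circ> real_of_ereal) \<longlongrightarrow> 0) (at_left \<infinity>)"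
      unfolding ereal_tendsto_simps using Af_lim_top[OF d] .
    show "((?F \<circ> real_of_ereal) \<longlongrightarrow> ?F c) (at_right (ereal c))"
      unfolding ereal_tendsto_simps
      by (intro isCont_tendsto_compose[OF Af_isCont] tendsto_ident_at)
  qed
  then show ?thesis by simp
qed



lemma cover:
  fixes z :: "nat \<Rightarrow> real"
  assumes mono: "\<And>i j. 1 \<le> i \<Longrightarrow> i \<le> j \<Longrightarrow> j \<le> r \<Longrightarrow> z i \<le> z j"
  shows "n \<le> r \<Longrightarrow> \<exists>j\<le>n. (\<forall>l. 1 \<le> l \<and> l \<le> j \<longrightarrow> z l < x) \<and> (\<forall>l. j < l \<and> l \<le> n \<longrightarrow> x \<le> z l)"
proof (induction n)
  case 0 show ?case by auto
next
  case (Suc n)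
  then obtain j where j: "j \<le> n" "\<forall>l. 1 \<le> l \<and> l \<le> j \<longrightarrow> z l < x" "\<forall>l. j < l \<and> l \<le> n \<longrightarrow> x \<le> z l"
    by auto
  show ?case
  proof (cases "j = n \<and> z (Suc n) < x")
    case True
    then show ?thesis using j by (intro exI[of _ "Suc n"]) (auto simp: le_Suc_eq)
  next
    case False
    have "x \<le> z (Suc n)"
    proof (cases "j = n")
      case True with False show ?thesis by auto
    next
      case False
      then have "j < n" using j by auto
      then have "x \<le> z n" using j by auto
      also have "z n \<le> z (Suc n)" using mono[of n "Suc n"] Suc.prems \<open>j<n\<close> by auto
      finally show ?thesis .
    qed
    then show ?thesis using j by (intro exI[of _ j]) (auto simp: le_Suc_eq)
  qed
qed

lemma dcoef_shift:
  assumes "Suc k \<le> r"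
  shows "dcoef r \<sigma> k = dcoef r \<sigma> (Suc k) + 2 / \<sigma> (Suc k)"
    and "ecoef r z \<sigma> k = ecoef r z \<sigma> (Suc k) - 2 * z (Suc k) / \<sigma> (Suc k)"
proof -
  have a: "(\<Sum>l=k+1..r. g l) = g (Suc k) + (\<Sum>l=Suc k+1..r. g l)" for g :: "nat \<Rightarrow> real"
    using assms by (simp add: sum.atLeast_Suc_atMost)
  show "dcoef r \<sigma> k = dcoef r \<sigma> (Suc k) + 2 / \<sigma> (Suc k)"
    unfolding dcoef_def a by simp
  show "ecoef r z \<sigma> k = ecoef r z \<sigma> (Suc k) - 2 * z (Suc k) / \<sigma> (Suc k)"
    unfolding ecoef_def a by simp
qed

theorem mainTheorem6:
  fixes r m :: nat and z \<sigma> :: "nat \<Rightarrow> real"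
  assumes "r \<ge> 1"
    and "\<And>i j. 1 \<le> i \<Longrightarrow> i \<le> j \<Longrightarrow> j \<le> r \<Longrightarrow> z i \<le> z j"
    and "\<And>l. 1 \<le> l \<Longrightarrow> l \<le> r \<Longrightarrow> \<sigma> l > 0"
  shows "(LINT x|lborel. x ^ m * exp (- (\<Sum>l=1..r. \<bar>x - z l\<bar> / \<sigma> l)))
         = (\<Sum>l=1..r. exp (dcoef r \<sigma> l * z l + ecoef r z \<sigma> l)
                        * (bcoef r z \<sigma> m (l - 1) l - bcoef r z \<sigma> m l l))"
proof -
  note r1 = assms(1) and mono = assms(2) and sp = assms(3)
  define D where "D = dcoef r \<sigma>"
  define E where "E = ecoef r z \<sigma>"
  define Iv where "Iv = (\<lambda>j. {x. (j = 0 \<or> z j \<le> x) \<and> (j = r \<or> x \<le> z (Suc j))})"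
  define c where "c = (\<lambda>j. \<Sum>l=1..j. Af m (D (l - 1)) (E (l - 1)) (z l) - Af m (D l) (E l) (z l))"
  define G where "G = (\<lambda>j x. Af m (D j) (E j) x + c j)"
  define F where "F = (\<lambda>x. G (SOME j. j \<le> r \<and> x \<in> Iv j) x)"
  define f where "f = (\<lambda>x::real. x ^ m * exp (- (\<Sum>l=1..r. \<bar>x - z l\<bar> / \<sigma> l)))"

  have cov: "\<exists>j\<le>r. x \<in> Iv j" for x
  proof -
    obtain j where j: "j \<le> r" "\<forall>l. 1 \<le> l \<and> l \<le> j \<longrightarrow> z l < x" "\<forall>l. j < l \<and> l \<le> r \<longrightarrow> x \<le> z l"
      using cover[of r z r x] mono by auto
    have a: "j = 0 \<or> z j \<le> x"
    proof (cases "j = 0")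
      case False
      then have "1 \<le> j" by simp
      then have "z j < x" using j(2) by blast
      then show ?thesis by simp
    qed simp
    have b: "j = r \<or> x \<le> z (Suc j)"
    proof (cases "j = r")
      case False
      then have "Suc j \<le> r" using j(1) by simp
      then show ?thesis using j(3) by auto
    qed simp
    have "x \<in> Iv j" unfolding Iv_def using a b by simp
    with j show ?thesis by auto
  qed

  have phi: "(\<Sum>l=1..r. \<bar>x - z l\<bar> / \<sigma> l) = - (D j * x + E j)" if j: "j \<le> r" "x \<in> Iv j" for j x
  proof -
    have lo: "z l \<le> x" if "l \<in> {1..j}" for l
    proof -
      have "z l \<le> z j" using mono[of l j] that j by auto
      also have "z j \<le> x" using j that unfolding Iv_def by auto
      finally show ?thesis .
    qed
    have hi: "x \<le> z l" if "l \<in> {j+1..r}" for l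
    proof -
      have "x \<le> z (Suc j)" using j that unfolding Iv_def by auto
      also have "z (Suc j) \<le> z l" using mono[of "Suc j" l] that by auto
      finally show ?thesis .
    qed
    have split: "{1..r} = {1..j} \<union> {j+1..r}" using j by auto
    have "(\<Sum>l=1..r. \<bar>x - z l\<bar> / \<sigma> l) = (\<Sum>l=1..j. \<bar>x - z l\<bar> / \<sigma> l) + (\<Sum>l=j+1..r. \<bar>x - z l\<bar> / \<sigma> l)"
      unfolding split by (rule sum.union_disjoint) auto
    also have "(\<Sum>l=1..j. \<bar>x - z l\<bar> / \<sigma> l) = (\<Sum>l=1..j. x * (1 / \<sigma> l) - z l / \<sigma> l)"
      by (rule sum.cong) (use lo in \<open>auto simp: diff_divide_distrib\<close>)
    also have "(\<Sum>l=j+1..r. \<bar>x - z l\<bar> / \<sigma> l) = (\<Sum>l=j+1..r. z l / \<sigma> l - x * (1 / \<sigma> l))"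
      by (rule sum.cong) (use hi in \<open>auto simp: diff_divide_distrib\<close>)
    finally show ?thesis
      unfolding D_def E_def dcoef_def ecoef_def
      by (simp add: sum_subtractf sum_distrib_left algebra_simps)
  qed

  have fIv: "f x = x ^ m * exp (D j * x + E j)" if "j \<le> r" "x \<in> Iv j" for j x
    unfolding f_def using phi[OF that] by simp

  have step: "G j x = G (Suc j) x" if "j < r" "x \<in> Iv j" "x \<in> Iv (Suc j)" for j x
  proof -
    have "x = z (Suc j)" using that unfolding Iv_def by auto
    then show ?thesis unfolding G_def c_def by simp
  qed

  have consist0: "G j x = G (j + k) x" if "j + k \<le> r" "x \<in> Iv j" "x \<in> Iv (j + k)" for j k x
    using that
  proof (induction k)
    case 0 then show ?case by simp
  next
    case (Suc k)
    have mid: "x \<in> Iv (j + k)"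
    proof -
      have a: "j + k = 0 \<or> z (j + k) \<le> x"
      proof (cases "j + k = 0")
        case False
        then have "z (j + k) \<le> z (j + Suc k)" using mono[of "j+k" "j + Suc k"] Suc.prems by auto
        also have "z (j + Suc k) \<le> x" using Suc.prems unfolding Iv_def by auto
        finally show ?thesis by simp
      qed simp
      have b: "x \<le> z (Suc (j + k))"
      proof -
        have "x \<le> z (Suc j)" using Suc.prems unfolding Iv_def by auto
        also have "z (Suc j) \<le> z (Suc (j + k))" using mono[of "Suc j" "Suc (j + k)"] Suc.prems by auto
        finally show ?thesis .
      qed
      show ?thesis unfolding Iv_def using a b by auto
    qed
    have "G j x = G (j + k) x" using Suc.IH Suc.prems mid by auto
    also have "\<dots> = G (Suc (j + k)) x" using step[of "j + k" x] Suc.prems mid by auto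
    finally show ?case by simp
  qed

  have consist: "G j x = G j' x" if "j \<le> r" "j' \<le> r" "x \<in> Iv j" "x \<in> Iv j'" for j j' x
  proof (cases "j \<le> j'")
    case True
    then show ?thesis using consist0[of j "j' - j" x] that by auto
  next
    case False
    then show ?thesis using consist0[of j' "j - j'" x] that by auto
  qed

  have F_eq: "F x = G j x" if "j \<le> r" "x \<in> Iv j" for j x
  proof -
    have ex: "\<exists>j. j \<le> r \<and> x \<in> Iv j" using cov by blast
    have "(SOME j. j \<le> r \<and> x \<in> Iv j) \<le> r \<and> x \<in> Iv (SOME j. j \<le> r \<and> x \<in> Iv j)"
      by (rule someI_ex[OF ex])
    then show ?thesis unfolding F_def using consist that by blast
  qed

  have Gc: "continuous_on A (G j)" for j A
    unfolding G_def by (intro continuous_at_imp_continuous_on ballI continuous_intros Af_isCont)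

  have Fc: "continuous_on UNIV F"
  proof -
    have U: "UNIV = (\<Union>j\<in>{0..r}. Iv j)"
    proof (intro set_eqI iffI)
      fix x :: real
      obtain j where "j \<le> r" "x \<in> Iv j" using cov by blast
      then show "x \<in> (\<Union>j\<in>{0..r}. Iv j)" by auto
    qed simp
    show ?thesis
      unfolding U
    proof (rule continuous_on_closed_Union)
      fix j assume "j \<in> {0..r}"
      have "Iv j = (if j = 0 then UNIV else {z j..}) \<inter> (if j = r then UNIV else {..z (Suc j)})"
        unfolding Iv_def by auto
      then show "closed (Iv j)" by (auto intro!: closed_Int)
      show "continuous_on (Iv j) F"
        using continuous_on_cong[OF refl, of "Iv j" F "G j"] Gc F_eq \<open>j \<in> {0..r}\<close> by auto
    qed simp
  qed

  have fc: "continuous_on UNIV f"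
    unfolding f_def by (intro continuous_intros) (use sp in force)

  have Fd: "(F has_real_derivative f x) (at x)" if "x \<notin> z ` {1..r}" for x
  proof -
    obtain j where j: "j \<le> r" "x \<in> Iv j" using cov by blast
    define U where "U = (if j = 0 then UNIV else {z j<..}) \<inter> (if j = r then UNIV else {..<z (Suc j)})"
    have "open U" unfolding U_def by (auto intro!: open_Int)
    have "x \<in> U"
    proof -
      have "j \<noteq> 0 \<Longrightarrow> x \<noteq> z j" using that j by auto
      moreover have "j \<noteq> r \<Longrightarrow> x \<noteq> z (Suc j)" using that j by auto
      ultimately show ?thesis using j unfolding U_def Iv_def by auto
    qed
    have UI: "U \<subseteq> Iv j" unfolding U_def Iv_def by auto
    have "(G j has_real_derivative x ^ m * exp (D j * x + E j)) (at x)"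
      unfolding G_def using DERIV_add[OF Af_deriv[of m "D j" "E j" x] DERIV_const[of "c j" "at x"]] by simp
    then have "(F has_real_derivative x ^ m * exp (D j * x + E j)) (at x)"
      by (rule has_field_derivative_transform_within_open[OF _ \<open>open U\<close> \<open>x \<in> U\<close>])
         (use F_eq UI j in auto)
    then show ?thesis using fIv[OF j] by simp
  qed

  have D0: "D 0 > 0"
    unfolding D_def dcoef_def using r1 sp by (auto intro!: sum_pos)
  have Dr: "D r < 0"
    unfolding D_def dcoef_def using r1 sp by (auto intro!: sum_pos)

  have Flim_bot: "(F \<longlongrightarrow> 0) at_bot"
  proof (rule Lim_transform_eventually)
    show "(Af m (D 0) (E 0) \<longlongrightarrow> 0) at_bot" by (rule Af_lim_bot[OF D0])
    have "eventually (\<lambda>x. x \<le> z 1) at_bot" by simp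
    then show "eventually (\<lambda>x. Af m (D 0) (E 0) x = F x) at_bot"
    proof (rule eventually_mono)
      fix x assume "x \<le> z 1"
      then have "x \<in> Iv 0" unfolding Iv_def using r1 by auto
      then show "Af m (D 0) (E 0) x = F x" using F_eq[of 0 x] unfolding G_def c_def by simp
    qed
  qed

  have Flim_top: "(F \<longlongrightarrow> c r) at_top"
  proof (rule Lim_transform_eventually)
    show "((\<lambda>x. Af m (D r) (E r) x + c r) \<longlongrightarrow> c r) at_top"
      using tendsto_add[OF Af_lim_top[OF Dr] tendsto_const[of "c r"]] by simp
    have "eventually (\<lambda>x. z r \<le> x) at_top" by simp
    then show "eventually (\<lambda>x. Af m (D r) (E r) x + c r = F x) at_top"
    proof (rule eventually_mono)
      fix x assume "z r \<le> x"
      then have "x \<in> Iv r" unfolding Iv_def using r1 by auto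
      then show "Af m (D r) (E r) x + c r = F x" using F_eq[of r x] unfolding G_def by simp
    qed
  qed

  have fint: "integrable lborel f"
  proof -
    define c1 where "c1 = min (z 1) 0"
    define c2 where "c2 = max (z r) 0"
    have i1: "set_integrable lborel {..<c1} f"
    proof -
      have "set_integrable lborel {..<c1} (\<lambda>x. x ^ m * exp (D 0 * x + E 0))"
        by (rule tail_left[OF D0]) (simp add: c1_def)
      moreover have "x \<in> {..<c1} \<Longrightarrow> f x = x ^ m * exp (D 0 * x + E 0)" for x
        by (rule fIv) (use r1 in \<open>auto simp: Iv_def c1_def\<close>)
      ultimately show ?thesis using set_integrable_cong by (metis (no_types, lifting))
    qed
    have i3: "set_integrable lborel {c2<..} f"
    proof -
      have "set_integrable lborel {c2<..} (\<lambda>x. x ^ m * exp (D r * x + E r))"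
        by (rule tail_right[OF Dr]) (simp add: c2_def)
      moreover have "x \<in> {c2<..} \<Longrightarrow> f x = x ^ m * exp (D r * x + E r)" for x
        by (rule fIv) (use r1 in \<open>auto simp: Iv_def c2_def\<close>)
      ultimately show ?thesis using set_integrable_cong by (metis (no_types, lifting))
    qed
    have i2: "set_integrable lborel {c1..c2} f"
      by (rule borel_integrable_atLeastAtMost') (rule continuous_on_subset[OF fc], simp)
    have "set_integrable lborel ({..<c1} \<union> {c1..c2} \<union> {c2<..}) f"
      by (intro set_integrable_Un i1 i2 i3) auto
    moreover have "{..<c1} \<union> {c1..c2} \<union> {c2<..} = UNIV"
      unfolding c1_def c2_def by auto
    ultimately show ?thesis unfolding set_integrable_def by simp
  qed

  have main: "integral\<^sup>L lborel f = c r - 0"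
    by (rule lint_FTC_piecewise[OF fint fc Fc _ Fd Flim_bot Flim_top]) auto

  have bP: "bcoef r z \<sigma> m j k = Pc m (D j) (z k)" for j k
    unfolding bcoef_def Pc_def Qs_def D_def by simp

  have "c r = (\<Sum>l=1..r. exp (dcoef r \<sigma> l * z l + ecoef r z \<sigma> l)
                        * (bcoef r z \<sigma> m (l - 1) l - bcoef r z \<sigma> m l l))"
    unfolding c_def
  proof (rule sum.cong[OF refl])
    fix l assume l: "l \<in> {1..r}"
    then obtain k where k: "l = Suc k" by (cases l) auto
    have "D k * z l + E k = D l * z l + E l"
      using dcoef_shift(1)[where k=k and r=r and \<sigma>=\<sigma>] dcoef_shift(2)[where k=k and r=r and z=z and \<sigma>=\<sigma>] l k unfolding D_def E_def by (simp add: field_simps)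
    then show "Af m (D (l - 1)) (E (l - 1)) (z l) - Af m (D l) (E l) (z l) =
        exp (dcoef r \<sigma> l * z l + ecoef r z \<sigma> l) * (bcoef r z \<sigma> m (l - 1) l - bcoef r z \<sigma> m l l)"
      unfolding Af_def bP using k by (simp add: D_def E_def algebra_simps)
  qed
  with main show ?thesis unfolding f_def by simp
qed

end
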